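(* For any real $n\times n$ matrix $A$ there exist an integer $m$, a purely competitive $m\times m$ real matrix $B$, and an injective linear map $T:\mathbb R^n\to\mathbb R^m$ such that $TA=BT$.
   Context: A square real matrix $B$ is competitive if $B_{ij}\le 0$ for all $i\ne j$, and purely competitive if it is competitive and additionally $B_{ii}=0$ for all $i$. *)

theory Defs
  imports "Jordan_Normal_Form.Matrix"
begin

definition competitive :: "real mat \<Rightarrow> bool" where
  "competitive B \<longleftrightarrow> dim_row B = dim_col B \<and>
     (\<forall>i < dim_row B. \<forall>j < dim_col B. i \<noteq> j \<longrightarrow> B $$ (i, j) \<le> 0)"

definition purely_competitive :: "real mat \<Rightarrow> bool" where
  "purely_competitive B \<longleftrightarrow> competitive B \<and> (\<forall>i < dim_row B. B $$ (i, i) = 0)"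

end

theory Submission
  imports Defs
begin

lemma sum4_group: "(\<Sum>l<4*(n::nat). (g::nat\<Rightarrow>real) l) = (\<Sum>i<n. g (4*i) + g (4*i+1) + g (4*i+2) + g (4*i+3))"
proof (induction n)
  case 0 then show ?case by simp
next
  case (Suc n)
  have e: "4 * Suc n = Suc (Suc (Suc (Suc (4*n))))" by simp
  show ?case unfolding e using Suc by (simp add: add.assoc ac_simps eval_nat_numeral)
qed

definition sgn4 :: "nat \<Rightarrow> real" where "sgn4 b = (if b < 2 then 1 else -1)"
definition X4 :: "nat \<Rightarrow> nat \<Rightarrow> real" where
  "X4 b c = (if (b,c) \<in> {(0,1),(1,0),(2,3),(3,2)} then 1 else 0)"
definition Y4 :: "nat \<Rightarrow> nat \<Rightarrow> real" where
  "Y4 b c = (if (b,c) \<in> {(0,2),(2,0),(1,3),(3,1)} then 1 else 0)"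

theorem lemma4:
  fixes A :: "real mat" and n :: nat
  assumes "A \<in> carrier_mat n n"
  shows "\<exists>(m::nat) (B::real mat) (T::real mat).
           B \<in> carrier_mat m m \<and> purely_competitive B \<and>
           T \<in> carrier_mat m n \<and> inj_on (\<lambda>v. T *\<^sub>v v) (carrier_vec n) \<and>
           T * A = B * T"
proof -
  define N where "N i j = min (A $$ (i,j)) 0" for i j
  define P where "P i j = - max (A $$ (i,j)) 0" for i j
  define T where "T = mat (4*n) n (\<lambda>(k,j). if k div 4 = j then sgn4 (k mod 4) else 0)"
  define B where "B = mat (4*n) (4*n) (\<lambda>(k,l). N (k div 4) (l div 4) * X4 (k mod 4) (l mod 4)
                        + P (k div 4) (l div 4) * Y4 (k mod 4) (l mod 4))"
  have Bc: "B \<in> carrier_mat (4*n) (4*n)" unfolding B_def by simp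
  have Tc: "T \<in> carrier_mat (4*n) n" unfolding T_def by simp
  have pc: "purely_competitive B"
  proof -
    have "B $$ (k,l) \<le> 0" if "k < 4*n" "l < 4*n" for k l
    proof -
      have "N (k div 4) (l div 4) * X4 (k mod 4) (l mod 4) \<le> 0"
        by (rule mult_nonpos_nonneg) (auto simp: N_def X4_def)
      moreover have "P (k div 4) (l div 4) * Y4 (k mod 4) (l mod 4) \<le> 0"
        by (rule mult_nonpos_nonneg) (auto simp: P_def Y4_def)
      ultimately show ?thesis using that unfolding B_def by simp
    qed
    moreover have "B $$ (k,k) = 0" if "k < 4*n" for k
      using that unfolding B_def by (simp add: X4_def Y4_def)
    ultimately show ?thesis unfolding purely_competitive_def competitive_def B_def by auto
  qed
  have inj: "inj_on (\<lambda>v. T *\<^sub>v v) (carrier_vec n)"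
  proof (rule inj_onI)
    fix v w :: "real vec" assume v: "v \<in> carrier_vec n" and w: "w \<in> carrier_vec n"
      and eq: "T *\<^sub>v v = T *\<^sub>v w"
    have "v $ i = w $ i" if i: "i < n" for i
    proof -
      have c: "(T *\<^sub>v u) $ (4*i) = u $ i" if "u \<in> carrier_vec n" for u
      proof -
        have "(T *\<^sub>v u) $ (4*i) = (\<Sum>j<n. T $$ (4*i, j) * u $ j)"
          using i that Tc by (simp add: scalar_prod_def row_def atLeast0LessThan mult.commute)
        also have "\<dots> = (\<Sum>j<n. if j = i then u $ j else 0)"
          by (rule sum.cong) (auto simp: T_def sgn4_def i)
        also have "\<dots> = u $ i" using i by simp
        finally show ?thesis .
      qed
      show ?thesis using c[OF v] c[OF w] eq by simp
    qed
    then show "v = w" using v w by (intro eq_vecI) auto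
  qed
  have main: "T * A = B * T"
  proof (rule eq_matI)
    show "dim_row (T * A) = dim_row (B * T)" using Tc Bc by simp
    show "dim_col (T * A) = dim_col (B * T)" using Tc Bc assms by simp
    fix k j assume k: "k < dim_row (B * T)" and j: "j < dim_col (B * T)"
    have kk: "k < 4*n" and jj: "j < n" using k j Bc Tc by auto
    have kd: "k div 4 < n" using kk by simp
    have "(T * A) $$ (k,j) = (\<Sum>l<n. T $$ (k,l) * A $$ (l,j))"
      using kk jj Tc assms by (simp add: scalar_prod_def row_def col_def atLeast0LessThan)
    also have "\<dots> = (\<Sum>l<n. if l = k div 4 then sgn4 (k mod 4) * A $$ (l,j) else 0)"
      by (rule sum.cong) (auto simp: T_def kk)
    also have "\<dots> = sgn4 (k mod 4) * A $$ (k div 4, j)" using kd by simp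
    finally have L: "(T * A) $$ (k,j) = sgn4 (k mod 4) * A $$ (k div 4, j)" .
    define g where "g l = B $$ (k,l) * T $$ (l,j)" for l
    have "(B * T) $$ (k,j) = (\<Sum>l<4*n. g l)"
      using kk jj Tc Bc by (simp add: scalar_prod_def row_def col_def atLeast0LessThan g_def)
    also have "\<dots> = (\<Sum>i<n. g (4*i) + g (4*i+1) + g (4*i+2) + g (4*i+3))"
      by (rule sum4_group)
    also have "\<dots> = (\<Sum>i<n. if i = j then
        N (k div 4) j * (X4 (k mod 4) 0 - X4 (k mod 4) 2 + X4 (k mod 4) 1 - X4 (k mod 4) 3)
      + P (k div 4) j * (Y4 (k mod 4) 0 - Y4 (k mod 4) 2 + Y4 (k mod 4) 1 - Y4 (k mod 4) 3) else 0)"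
    proof (rule sum.cong)
      fix i assume i: "i \<in> {..<n}"
      have lt: "4*i < 4*n" "4*i+1 < 4*n" "4*i+2 < 4*n" "4*i+3 < 4*n" using i by auto
      have dm: "(4*i) div 4 = i" "(4*i+1) div 4 = i" "(4*i+2) div 4 = i" "(4*i+3) div 4 = i"
        "(4*i) mod 4 = 0" "(4*i+1) mod 4 = 1" "(4*i+2) mod 4 = 2" "(4*i+3) mod 4 = 3" by presburger+
      show "g (4*i) + g (4*i+1) + g (4*i+2) + g (4*i+3) = (if i = j then
        N (k div 4) j * (X4 (k mod 4) 0 - X4 (k mod 4) 2 + X4 (k mod 4) 1 - X4 (k mod 4) 3)
      + P (k div 4) j * (Y4 (k mod 4) 0 - Y4 (k mod 4) 2 + Y4 (k mod 4) 1 - Y4 (k mod 4) 3) else 0)"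
        using lt kk jj unfolding g_def B_def T_def by (simp only: index_mat dm split) (simp add: sgn4_def algebra_simps)
    qed simp
    also have "\<dots> = N (k div 4) j * (X4 (k mod 4) 0 - X4 (k mod 4) 2 + X4 (k mod 4) 1 - X4 (k mod 4) 3)
      + P (k div 4) j * (Y4 (k mod 4) 0 - Y4 (k mod 4) 2 + Y4 (k mod 4) 1 - Y4 (k mod 4) 3)"
      using jj by simp
    also have "\<dots> = sgn4 (k mod 4) * A $$ (k div 4, j)"
    proof -
      have "k mod 4 < 4" by simp
      then have "k mod 4 = 0 \<or> k mod 4 = 1 \<or> k mod 4 = 2 \<or> k mod 4 = 3" by linarith
      moreover have "N (k div 4) j - P (k div 4) j = A $$ (k div 4, j)"
        unfolding N_def P_def by linarith
      ultimately show ?thesis by (auto simp: X4_def Y4_def sgn4_def algebra_simps)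
    qed
    finally show "(T * A) $$ (k,j) = (B * T) $$ (k,j)" using L by simp
  qed
  show ?thesis using Bc pc Tc inj main by blast
qed

end
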